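(* Let $f_j$, $j\in J=\{1,\dots,m\}$, be convex functions on $\mathbb{R}^n$, let $D=\{x\in\mathbb{R}^n: f_j(x)\le 0,\ j\in J\}$, and let $f$ be a continuous function on $\mathbb{R}^n$ attaining its minimum on $D$. Assume that $f$ is convex, that each $f_j$ is strongly convex with constant $\mu_j>0$, that $D$ satisfies the Slater condition, and that no point of absolute (unconstrained) minimum of $f$ on $\mathbb{R}^n$ (if such a point exists) belongs to $\operatorname{int} D$. Then the problem $\min\{f(x): x\in D\}$ has a unique solution.
   Context: For each $j\in J$ the set $D_j=\{x: f_j(x)\le 0\}$ is assumed to have nonempty interior. *)

theory Defs
  imports "HOL-Analysis.Analysis"
begin

definition strongly_convex_on :: "'a::real_normed_vector set \<Rightarrow> real \<Rightarrow> ('a \<Rightarrow> real) \<Rightarrow> bool" where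
  "strongly_convex_on S mu g \<longleftrightarrow>
     (\<forall>x\<in>S. \<forall>y\<in>S. \<forall>t::real. 0 \<le> t \<and> t \<le> 1 \<longrightarrow>
        g (t *\<^sub>R x + (1 - t) *\<^sub>R y) \<le> t * g x + (1 - t) * g y - mu / 2 * t * (1 - t) * (norm (x - y))\<^sup>2)"

definition slater :: "'i set \<Rightarrow> ('i \<Rightarrow> 'a \<Rightarrow> real) \<Rightarrow> bool" where
  "slater J fs \<longleftrightarrow> (\<exists>x. \<forall>j\<in>J. fs j x < 0)"

end

theory Submission
  imports Defs
begin

theorem theorem1p1p3:
  fixes f :: "real ^ 'n \<Rightarrow> real"
    and fs :: "nat \<Rightarrow> real ^ 'n \<Rightarrow> real"
    and mu :: "nat \<Rightarrow> real"
    and m :: nat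
    and D :: "(real ^ 'n) set"
  assumes D_def: "D = {x. \<forall>j\<in>{1..m}. fs j x \<le> 0}"
    and fs_convex: "\<forall>j\<in>{1..m}. convex_on UNIV (fs j)"
    and fs_strong: "\<forall>j\<in>{1..m}. mu j > 0 \<and> strongly_convex_on UNIV (mu j) (fs j)"
    and Dj_int: "\<forall>j\<in>{1..m}. interior {x. fs j x \<le> 0} \<noteq> {}"
    and f_cont: "continuous_on UNIV f"
    and f_convex: "convex_on UNIV f"
    and f_attains: "\<exists>x\<in>D. \<forall>y\<in>D. f x \<le> f y"
    and slater: "slater {1..m} fs"
    and no_abs_min_in_int: "\<forall>x. (\<forall>y. f x \<le> f y) \<longrightarrow> x \<notin> interior D"
  shows "\<exists>!x. x \<in> D \<and> (\<forall>y\<in>D. f x \<le> f y)"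
proof -
  obtain x0 where x0: "x0 \<in> D" "\<forall>y\<in>D. f x0 \<le> f y" using f_attains by blast
  have cont: "continuous_on UNIV (fs j)" if "j \<in> {1..m}" for j
    using convex_on_continuous[OF open_UNIV] fs_convex that by blast
  have uniq: "x = y" if hx: "x \<in> D" "\<forall>w\<in>D. f x \<le> f w" and hy: "y \<in> D" "\<forall>w\<in>D. f y \<le> f w" for x y
  proof (rule ccontr)
    assume ne: "x \<noteq> y"
    define z where "z = (1/2::real) *\<^sub>R x + (1 - 1/2) *\<^sub>R y"
    have nz: "(norm (x - y))\<^sup>2 > 0" using ne by simp
    have zneg: "fs j z < 0" if j: "j \<in> {1..m}" for j
    proof -
      have sc: "strongly_convex_on UNIV (mu j) (fs j)" and mp: "mu j > 0" using fs_strong j by auto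
      have "fs j z \<le> 1/2 * fs j x + (1 - 1/2) * fs j y - mu j / 2 * (1/2) * (1 - 1/2) * (norm (x - y))\<^sup>2"
        proof -
        have "\<forall>x\<in>UNIV. \<forall>y\<in>UNIV. \<forall>t::real. 0 \<le> t \<and> t \<le> 1 \<longrightarrow>
          fs j (t *\<^sub>R x + (1 - t) *\<^sub>R y) \<le> t * fs j x + (1 - t) * fs j y - mu j / 2 * t * (1 - t) * (norm (x - y))\<^sup>2"
          using sc unfolding strongly_convex_on_def by blast
        hence "\<forall>t::real. 0 \<le> t \<and> t \<le> 1 \<longrightarrow>
          fs j (t *\<^sub>R x + (1 - t) *\<^sub>R y) \<le> t * fs j x + (1 - t) * fs j y - mu j / 2 * t * (1 - t) * (norm (x - y))\<^sup>2"
          by blast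
        from spec[OF this, of "1/2"] show ?thesis unfolding z_def by simp
      qed
      moreover have "fs j x \<le> 0" "fs j y \<le> 0" using hx hy j D_def by auto
      moreover have "mu j / 2 * (1/2) * (1 - 1/2) * (norm (x - y))\<^sup>2 > 0" using mp nz by simp
      ultimately show ?thesis by simp
    qed
    define U where "U = (\<Inter>j\<in>{1..m}. {w. fs j w < 0})"
    have "open U" unfolding U_def
      by (intro open_INT finite_atLeastAtMost ballI open_Collect_less cont continuous_on_const)
    moreover have "U \<subseteq> D" unfolding U_def D_def by (auto intro: less_imp_le)
    moreover have "z \<in> U" unfolding U_def using zneg by auto
    ultimately have zint: "z \<in> interior D" using interior_maximal by blast
    have "f z \<le> 1/2 * f x + (1 - 1/2) * f y"
      using convex_onD[OF f_convex, of "1/2" y x] unfolding z_def by (simp add: add.commute)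
    moreover have "f x = f y" using hx hy by force
    ultimately have fzle: "f z \<le> f x" by simp
    have zD: "z \<in> D" using zint interior_subset by blast
    have zmin: "\<forall>w\<in>D. f z \<le> f w" using fzle hx by force
    obtain e where e: "e > 0" "ball z e \<subseteq> D" using zint open_interior open_contains_ball interior_subset
      by (meson mem_interior)
    have "f z \<le> f w" for w
    proof -
      define t where "t = min (1/2) (e / (2 * (norm (w - z) + 1)))"
      have t0: "t > 0"
      proof -
        have "2 * (norm (w - z) + 1) > 0" by (simp add: add_nonneg_pos)
        hence "e / (2 * (norm (w - z) + 1)) > 0" using e(1) by (rule divide_pos_pos[rotated])
        thus ?thesis by (simp add: t_def)
      qed
      have t1: "t \<le> 1" by (simp add: t_def)
      define p where "p = (1 - t) *\<^sub>R z + t *\<^sub>R w"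
      have "dist z p = t * norm (w - z)"
      proof -
        have "z - p = t *\<^sub>R (z - w)" by (simp add: p_def algebra_simps)
        thus ?thesis using t0 by (simp add: dist_norm norm_minus_commute)
      qed
      also have "\<dots> \<le> e / (2 * (norm (w - z) + 1)) * norm (w - z)"
        by (intro mult_right_mono) (auto simp: t_def)
      also have "\<dots> < e"
      proof -
        have "norm (w - z) / (2 * (norm (w - z) + 1)) < 1"
          using norm_ge_zero[of "w - z"] by (simp add: divide_less_eq) (smt (verit) norm_ge_zero)
        hence "e * (norm (w - z) / (2 * (norm (w - z) + 1))) < e * 1" using e(1)
          by (intro mult_strict_left_mono) auto
        thus ?thesis by simp
      qed
      finally have "p \<in> D" using e by auto
      hence "f z \<le> f p" using zmin by auto
      also have "\<dots> \<le> (1 - t) * f z + t * f w"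
        using convex_onD[OF f_convex, of t z w] t0 t1 unfolding p_def by simp
      finally have "t * f z \<le> t * f w" by (simp add: algebra_simps)
      thus ?thesis using t0 by simp
    qed
    thus False using no_abs_min_in_int zint by blast
  qed
  show ?thesis using x0 uniq by blast
qed

end
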